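(* Let $V$ be a finite set and $n\ge 1$ an integer. The functions $m_G$, as $G$ ranges over all multigraphs on vertex set $V$ (self-loops allowed) with $|E(G)|\le n$, are linearly independent as functions of $(d_u)_{u\in V}\in(\mathbb{R}^n)^V$.
   Context: A multigraph $G$ on $V$ is a finite multiset $E(G)$ of edges $\{u,w\}$ with $u,w\in V$, where $u=w$ (a self-loop) is allowed. For vectors $d_u\in\mathbb{R}^n$ ($u\in V$), $m_G=\prod_{\{u,w\}\in E(G)}\langle d_u,d_w\rangle$, with multiplicity, where a self-loop at $u$ contributes the factor $\langle d_u,d_u\rangle$. *)

theory Defs
  imports "HOL-Analysis.Analysis" "HOL-Library.Multiset" "HOL-Library.Uprod"
begin

text \<open>An edge is an unordered pair (u = w allowed: a self-loop).\<close>

definition edge_factor :: "('v \<Rightarrow> real^'n) \<Rightarrow> 'v uprod \<Rightarrow> real" where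
  "edge_factor d e = (THE r. \<exists>u w. e = Upair u w \<and> r = d u \<bullet> d w)"

definition mG :: "'v uprod multiset \<Rightarrow> ('v \<Rightarrow> real^'n) \<Rightarrow> real" where
  "mG G d = (\<Prod>e\<in>#G. edge_factor d e)"

definition multigraphs_upto :: "'v set \<Rightarrow> nat \<Rightarrow> 'v uprod multiset set" where
  "multigraphs_upto V k = {G. (\<forall>e\<in>#G. set_uprod e \<subseteq> V) \<and> size G \<le> k}"

end

theory Submission
  imports Defs
begin

lemma mono_indep:
  fixes a :: "'i multiset \<Rightarrow> real"
  assumes "finite I"
  shows "finite S \<Longrightarrow> (\<forall>M\<in>S. set_mset M \<subseteq> I) \<Longrightarrow>
    (\<forall>x. (\<Sum>M\<in>S. a M * prod_mset (image_mset x M)) = 0) \<Longrightarrow> M \<in> S \<Longrightarrow> a M = 0"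
  using assms
proof (induction I arbitrary: S a M rule: finite_induct)
  case empty
  then have "S \<subseteq> {{#}}" by auto
  with empty show ?case
    by (cases "S = {}") (auto dest: subset_singletonD)
next
  case (insert j I)
  define K where "K = Max ((\<lambda>M. count M j) ` S)"
  define F where "F M = filter_mset (\<lambda>i. i \<noteq> j) M" for M
  have decomp: "M = F M + replicate_mset (count M j) j" for M
    unfolding F_def by (induction M) auto
  have FI: "set_mset (F M) \<subseteq> I" if "M \<in> S" for M
    using insert.prems(2) that unfolding F_def by auto
  have monoF: "prod_mset (image_mset (x(j:=t)) (F M)) = prod_mset (image_mset x (F M))" if "M \<in> S" for M x t
  proof -
    have "j \<notin> set_mset (F M)" unfolding F_def by auto
    then show ?thesis by (intro arg_cong[where f=prod_mset] image_mset_cong) auto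
  qed
  have coef: "(\<Sum>M\<in>{M\<in>S. count M j = k}. a M * prod_mset (image_mset x (F M))) = 0" for x k
  proof -
    define c where "c k = (\<Sum>M\<in>{M\<in>S. count M j = k}. a M * prod_mset (image_mset x (F M)))" for k
    have "\<forall>t. (\<Sum>k\<le>K. c k * t ^ k) = 0"
    proof
      fix t
      have "0 = (\<Sum>M\<in>S. a M * prod_mset (image_mset (x(j:=t)) M))"
        using insert.prems(3) by metis
      also have "\<dots> = (\<Sum>M\<in>S. a M * prod_mset (image_mset x (F M)) * t ^ count M j)"
      proof (rule sum.cong[OF refl])
        fix M assume "M \<in> S"
        have "prod_mset (image_mset (x(j:=t)) M) = prod_mset (image_mset (x(j:=t)) (F M)) * t ^ count M j"
          by (subst decomp[of M]) simp
        also have "\<dots> = prod_mset (image_mset x (F M)) * t ^ count M j"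
          using monoF[OF \<open>M \<in> S\<close>, of x t] by (simp only:)
        finally show "a M * prod_mset (image_mset (x(j:=t)) M) = a M * prod_mset (image_mset x (F M)) * t ^ count M j"
          by simp
      qed
      also have "\<dots> = (\<Sum>k\<in>(\<lambda>M. count M j) ` S. \<Sum>M\<in>{M\<in>S. count M j = k}. a M * prod_mset (image_mset x (F M)) * t ^ count M j)"
        using insert.prems(1) by (rule sum.image_gen)
      also have "\<dots> = (\<Sum>k\<in>(\<lambda>M. count M j) ` S. c k * t ^ k)"
        unfolding c_def sum_distrib_right by (intro sum.cong refl) auto
      also have "\<dots> = (\<Sum>k\<le>K. c k * t ^ k)"
      proof (rule sum.mono_neutral_left)
        show "(\<lambda>M. count M j) ` S \<subseteq> {..K}" unfolding K_def using insert.prems(1) by auto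
        show "\<forall>i\<in>{..K} - (\<lambda>M. count M j) ` S. c i * t ^ i = 0"
        proof
          fix i assume "i \<in> {..K} - (\<lambda>M. count M j) ` S"
          then have e: "{M\<in>S. count M j = i} = {}" by auto
          show "c i * t ^ i = 0" unfolding c_def e by simp
        qed
      qed auto
      finally show "(\<Sum>k\<le>K. c k * t ^ k) = 0" by simp
    qed
    then have "\<forall>k\<le>K. c k = 0" using polyfun_eq_0 by blast
    moreover have "c k = 0" if "k > K"
    proof -
      have "{M\<in>S. count M j = k} = {}" using that insert.prems(1)
        using Max_ge[of "(\<lambda>M. count M j) ` S"] unfolding K_def by fastforce
      then show ?thesis unfolding c_def by (simp only: sum.empty)
    qed
    ultimately show ?thesis unfolding c_def by (meson not_le)
  qed
  define k where "k = count M j"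
  define S' where "S' = F ` {M\<in>S. count M j = k}"
  define a' where "a' N = a (N + replicate_mset k j)" for N
  have inj: "inj_on F {M\<in>S. count M j = k}"
    by (rule inj_onI) (metis (mono_tags, lifting) decomp mem_Collect_eq)
  have "a' (F M) = 0"
  proof (rule insert.IH)
    show "finite S'" unfolding S'_def using insert.prems(1) by simp
    show "\<forall>M\<in>S'. set_mset M \<subseteq> I" unfolding S'_def using FI by auto
    show "F M \<in> S'" unfolding S'_def k_def using insert.prems(4) by auto
    show "\<forall>x. (\<Sum>N\<in>S'. a' N * prod_mset (image_mset x N)) = 0"
    proof
      fix x
      have "(\<Sum>N\<in>S'. a' N * prod_mset (image_mset x N)) =
          (\<Sum>M\<in>{M\<in>S. count M j = k}. a' (F M) * prod_mset (image_mset x (F M)))"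
        unfolding S'_def by (rule sum.reindex[OF inj, unfolded comp_def])
      also have "\<dots> = (\<Sum>M\<in>{M\<in>S. count M j = k}. a M * prod_mset (image_mset x (F M)))"
        unfolding a'_def by (intro sum.cong refl) (metis (mono_tags, lifting) decomp mem_Collect_eq)
      finally show "(\<Sum>N\<in>S'. a' N * prod_mset (image_mset x N)) = 0" using coef by simp
    qed
  qed
  then show ?case unfolding a'_def k_def using decomp[of M] by simp
qed


definition ends :: "'v uprod \<Rightarrow> 'v multiset" where
  "ends e = (THE M. \<exists>a b. e = Upair a b \<and> M = {#a, b#})"

lemma ends_Upair[simp]: "ends (Upair a b) = {#a, b#}"
  unfolding ends_def by (rule the_equality) (auto simp: add_mset_commute)

lemma size_ends[simp]: "size (ends e) = 2"
  by (cases e) simp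

lemma set_ends[simp]: "set_mset (ends e) = set_uprod e"
  by (cases e) simp

lemma ends_inj: "ends e = ends f \<Longrightarrow> e = f"
  by (cases e; cases f) (auto simp: add_eq_conv_ex)

lemma edge_factor_Upair[simp]: "edge_factor d (Upair a b) = d a \<bullet> d b"
  unfolding edge_factor_def by (rule the_equality) (auto simp: inner_commute)

lemma size_sum_ends: "size (sum_mset (image_mset ends A)) = 2 * size A"
  by (induction A) auto

lemma ends_sum_eq:
  assumes "size B \<le> 1" "sum_mset (image_mset ends A) = sum_mset (image_mset ends B)"
  shows "A = B"
proof -
  have "size A = size B" using size_sum_ends[of A] size_sum_ends[of B] assms(2) by simp
  show ?thesis
  proof (cases "size B = 0")
    case True then show ?thesis using \<open>size A = size B\<close> by simp
  next
    case False
    then have "size B = 1" "size A = 1" using assms(1) \<open>size A = size B\<close> by linarith+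
    then obtain e f where "A = {#e#}" "B = {#f#}" using size_1_singleton_mset by metis
    with assms(2) show ?thesis using ends_inj by auto
  qed
qed

lemma sum_single_mset: "(\<Sum>l\<in>B. {#f l#}) = image_mset f (mset_set B)"
proof (cases "finite B")
  case True then show ?thesis by (induction B rule: finite_induct) auto
qed simp

lemma prod_mset_sum: "prod_mset (image_mset x (\<Sum>l\<in>A. N l)) = (\<Prod>l\<in>A. prod_mset (image_mset x (N l)))"
proof (cases "finite A")
  case True then show ?thesis by (induction A rule: finite_induct) auto
qed simp

definition Proj :: "'n \<Rightarrow> ('v \<times> 'n) multiset \<Rightarrow> 'v multiset" where
  "Proj j M = image_mset fst (filter_mset (\<lambda>p. snd p = j) M)"

lemma Proj_sum: "Proj j (\<Sum>l\<in>A. N l) = (\<Sum>l\<in>A. Proj j (N l))"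
proof (cases "finite A")
  case True then show ?thesis by (induction A rule: finite_induct) (auto simp: Proj_def)
qed (simp add: Proj_def)

lemma Proj_col: "Proj j (image_mset (\<lambda>u. (u, i)) E) = (if i = j then E else {#})"
  unfolding Proj_def by (induction E) auto

definition Mon :: "'v uprod list \<Rightarrow> (nat \<Rightarrow> 'n) \<Rightarrow> ('v \<times> 'n) multiset" where
  "Mon hs \<sigma> = (\<Sum>l<length hs. image_mset (\<lambda>u. (u, \<sigma> l)) (ends (hs ! l)))"

definition Ej :: "'v uprod list \<Rightarrow> (nat \<Rightarrow> 'n) \<Rightarrow> 'n \<Rightarrow> 'v uprod multiset" where
  "Ej hs \<sigma> j = (\<Sum>l\<in>{l. l < length hs \<and> \<sigma> l = j}. {#hs ! l#})"

lemma mset_Ej: "mset hs = (\<Sum>j\<in>(UNIV::'n::finite set). Ej hs \<sigma> j)"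
proof -
  have "mset hs = (\<Sum>l<length hs. {#hs ! l#})"
    by (simp add: sum_single_mset lessThan_atLeast0 flip: mset_upt mset_map) (simp add: map_nth)
  also have "\<dots> = (\<Sum>j\<in>(UNIV::'n set). Ej hs \<sigma> j)"
    unfolding Ej_def using sum.group[of "{..<length hs}" "UNIV::'n set" \<sigma> "\<lambda>l. {#hs ! l#}"]
    by simp
  finally show ?thesis .
qed

lemma Proj_Mon: "Proj j (Mon hs \<sigma>) = sum_mset (image_mset ends (Ej hs \<sigma> j))"
proof -
  have "Proj j (Mon hs \<sigma>) = (\<Sum>l<length hs. if \<sigma> l = j then ends (hs ! l) else {#})"
    unfolding Mon_def Proj_sum Proj_col by simp
  also have "\<dots> = (\<Sum>l\<in>{l. l < length hs \<and> \<sigma> l = j}. ends (hs ! l))"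
    by (simp add: sum.If_cases Int_def conj_commute)
  also have "\<dots> = sum_mset (image_mset ends (Ej hs \<sigma> j))"
    unfolding Ej_def sum_single_mset by (simp add: sum_unfold_sum_mset image_mset.compositionality comp_def)
  finally show ?thesis .
qed

lemma Mon_recover:
  fixes \<sigma> \<sigma>0 :: "nat \<Rightarrow> 'n::finite"
  assumes "Mon hs \<sigma> = Mon hs0 \<sigma>0" "inj_on \<sigma>0 {..<length hs0}"
  shows "mset hs = mset hs0"
proof -
  have "Ej hs \<sigma> j = Ej hs0 \<sigma>0 j" for j
  proof (rule ends_sum_eq)
    have "card {l. l < length hs0 \<and> \<sigma>0 l = j} \<le> Suc 0"
      using assms(2) by (subst card_le_Suc0_iff_eq) (auto simp: inj_on_def)
    then show "size (Ej hs0 \<sigma>0 j) \<le> 1" unfolding Ej_def sum_single_mset by simp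
    show "sum_mset (image_mset ends (Ej hs \<sigma> j)) = sum_mset (image_mset ends (Ej hs0 \<sigma>0 j))"
      using assms(1) Proj_Mon by metis
  qed
  then show ?thesis by (simp add: mset_Ej[of hs \<sigma>] mset_Ej[of hs0 \<sigma>0])
qed


definition dx :: "('v \<times> 'n::finite \<Rightarrow> real) \<Rightarrow> 'v \<Rightarrow> real^'n" where
  "dx x u = (\<chi> j. x (u, j))"

lemma edge_dx: "edge_factor (dx x) e = (\<Sum>j\<in>UNIV. prod_mset (image_mset x (image_mset (\<lambda>u. (u, j)) (ends e))))"
  by (cases e) (simp add: dx_def inner_vec_def)

lemma mG_expand:
  "mG (mset hs) (dx x) = (\<Sum>\<sigma>\<in>{..<length hs} \<rightarrow>\<^sub>E (UNIV::'n::finite set). prod_mset (image_mset x (Mon hs \<sigma>)))"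
proof -
  have "mG (mset hs) (dx x) = (\<Prod>l<length hs. edge_factor (dx x) (hs ! l))"
    unfolding mG_def
  proof -
    have "image_mset (edge_factor (dx x)) (mset hs) = mset (map (edge_factor (dx x)) hs)" by simp
    then have "prod_mset (image_mset (edge_factor (dx x)) (mset hs)) = prod_list (map (edge_factor (dx x)) hs)"
      by (simp only: prod_mset_prod_list)
    also have "\<dots> = (\<Prod>l = 0..<length hs. map (edge_factor (dx x)) hs ! l)"
      by (subst prod.list_conv_set_nth) simp
    finally show "prod_mset (image_mset (edge_factor (dx x)) (mset hs)) = (\<Prod>l<length hs. edge_factor (dx x) (hs ! l))"
      by (simp add: lessThan_atLeast0)
  qed
  also have "\<dots> = (\<Prod>l<length hs. \<Sum>j\<in>(UNIV::'n set). prod_mset (image_mset x (image_mset (\<lambda>u. (u, j)) (ends (hs ! l)))))"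
    by (simp add: edge_dx)
  also have "\<dots> = (\<Sum>\<sigma>\<in>{..<length hs} \<rightarrow>\<^sub>E (UNIV::'n set). \<Prod>l<length hs. prod_mset (image_mset x (image_mset (\<lambda>u. (u, \<sigma> l)) (ends (hs ! l)))))"
    by (rule prod_sum_PiE) auto
  also have "\<dots> = (\<Sum>\<sigma>\<in>{..<length hs} \<rightarrow>\<^sub>E (UNIV::'n set). prod_mset (image_mset x (Mon hs \<sigma>)))"
    unfolding Mon_def prod_mset_sum ..
  finally show ?thesis .
qed

lemma finite_mg: "finite V \<Longrightarrow> finite (multigraphs_upto V k)"
proof -
  assume fV: "finite V"
  define E where "E = (\<lambda>(a, b). Upair a b) ` (V \<times> V)"
  have "multigraphs_upto V k \<subseteq> (\<Union>i\<le>k. multisets_of_size E i)"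
  proof
    fix G assume G: "G \<in> multigraphs_upto V k"
    have "set_mset G \<subseteq> E"
    proof
      fix e assume "e \<in># G"
      with G have "set_uprod e \<subseteq> V" unfolding multigraphs_upto_def by auto
      then show "e \<in> E" unfolding E_def by (cases e) auto
    qed
    with G show "G \<in> (\<Union>i\<le>k. multisets_of_size E i)"
      unfolding multigraphs_upto_def multisets_of_size_def by auto
  qed
  moreover have "finite E" unfolding E_def using fV by simp
  ultimately show ?thesis by (meson finite_UN_I finite_atMost finite_multisets_of_size finite_subset)
qed


lemma set_mset_sum: "finite A \<Longrightarrow> set_mset (\<Sum>l\<in>A. N l) = (\<Union>l\<in>A. set_mset (N l))"
  by (induction A rule: finite_induct) auto

theorem mainTheorem1:
  fixes V :: "'v set"
  assumes "finite V"
    and "\<forall>d :: 'v \<Rightarrow> real^'n.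
           (\<Sum>G\<in>multigraphs_upto V CARD('n). c G * mG G d) = 0"
  shows "\<forall>G\<in>multigraphs_upto V CARD('n). c G = 0"
proof
  define MG where "MG = multigraphs_upto V CARD('n)"
  fix G0 assume G0: "G0 \<in> multigraphs_upto V CARD('n)"
  define lst where "lst H = (SOME hs. mset hs = H)" for H :: "'v uprod multiset"
  have lst: "mset (lst H) = H" for H unfolding lst_def by (rule someI_ex) (rule ex_mset)
  define P where "P = Sigma MG (\<lambda>H. {..<length (lst H)} \<rightarrow>\<^sub>E (UNIV::'n set))"
  define Mn where "Mn q = Mon (lst (fst q)) (snd q)" for q :: "'v uprod multiset \<times> (nat \<Rightarrow> 'n)"
  have fMG: "finite MG" unfolding MG_def using assms(1) by (rule finite_mg)
  have fP: "finite P" unfolding P_def using fMG by (intro finite_SigmaI finite_PiE) auto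
  define a where "a M = (\<Sum>q\<in>{q\<in>P. Mn q = M}. c (fst q))" for M
  have key: "\<forall>x. (\<Sum>M\<in>Mn ` P. a M * prod_mset (image_mset x M)) = 0"
  proof
    fix x :: "'v \<times> 'n \<Rightarrow> real"
    have "(\<Sum>M\<in>Mn ` P. a M * prod_mset (image_mset x M))
        = (\<Sum>M\<in>Mn ` P. \<Sum>q\<in>{q\<in>P. Mn q = M}. c (fst q) * prod_mset (image_mset x (Mn q)))"
      unfolding a_def sum_distrib_right by (intro sum.cong refl) auto
    also have "\<dots> = (\<Sum>q\<in>P. c (fst q) * prod_mset (image_mset x (Mn q)))"
      by (rule sum.image_gen[OF fP, symmetric])
    also have "\<dots> = (\<Sum>H\<in>MG. \<Sum>\<sigma>\<in>{..<length (lst H)} \<rightarrow>\<^sub>E (UNIV::'n set). c H * prod_mset (image_mset x (Mon (lst H) \<sigma>)))"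
          proof -
      have "(\<Sum>q\<in>P. c (fst q) * prod_mset (image_mset x (Mn q))) = (\<Sum>(H,\<sigma>)\<in>P. c H * prod_mset (image_mset x (Mon (lst H) \<sigma>)))"
        by (simp add: Mn_def split_beta)
      also have "\<dots> = (\<Sum>H\<in>MG. \<Sum>\<sigma>\<in>{..<length (lst H)} \<rightarrow>\<^sub>E (UNIV::'n set). c H * prod_mset (image_mset x (Mon (lst H) \<sigma>)))"
        unfolding P_def by (rule sum.Sigma[symmetric, OF fMG]) (simp add: finite_PiE)
      finally show ?thesis .
    qed
    also have "\<dots> = (\<Sum>H\<in>MG. c H * mG H (dx x))"
    proof (intro sum.cong refl)
      fix H
      show "(\<Sum>\<sigma>\<in>{..<length (lst H)} \<rightarrow>\<^sub>E (UNIV::'n set). c H * prod_mset (image_mset x (Mon (lst H) \<sigma>))) = c H * mG H (dx x)"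
        using mG_expand[of "lst H" x] unfolding lst[of H] by (simp add: sum_distrib_left)
    qed
    also have "\<dots> = 0" using spec[OF assms(2), of "dx x"] unfolding MG_def by simp
    finally show "(\<Sum>M\<in>Mn ` P. a M * prod_mset (image_mset x M)) = 0" .
  qed
  have sub: "\<forall>M\<in>Mn ` P. set_mset M \<subseteq> V \<times> UNIV"
  proof
    fix M assume "M \<in> Mn ` P"
    then obtain H \<sigma> where H: "H \<in> MG" and M: "M = Mon (lst H) \<sigma>" unfolding P_def Mn_def by auto
    have "set_uprod (lst H ! l) \<subseteq> V" if "l < length (lst H)" for l
    proof -
      have "lst H ! l \<in># H" using that lst[of H] by (metis nth_mem set_mset_mset)
      then show ?thesis using H unfolding MG_def multigraphs_upto_def by auto
    qed
    then show "set_mset M \<subseteq> V \<times> UNIV" unfolding M Mon_def by (auto simp: set_mset_sum)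
  qed
  define k where "k = length (lst G0)"
  have "size G0 \<le> CARD('n)" using G0 by (simp add: multigraphs_upto_def)
  then have "k \<le> card (UNIV::'n set)" unfolding k_def using size_mset[of "lst G0"] lst[of G0] by simp
  then obtain f :: "nat \<Rightarrow> 'n" where f: "inj_on f {..<k}"
    using card_le_inj[of "{..<k}" "UNIV::'n set"] by auto
  define \<sigma>0 where "\<sigma>0 = restrict f {..<k}"
  have inj0: "inj_on \<sigma>0 {..<length (lst G0)}" using f unfolding \<sigma>0_def k_def inj_on_def by auto
  define q0 where "q0 = (G0, \<sigma>0)"
  have q0P: "q0 \<in> P" unfolding q0_def P_def MG_def \<sigma>0_def k_def using G0 by auto
  have "a (Mn q0) = 0"
    using assms(1) fP sub key q0P by (intro mono_indep[of "V \<times> UNIV" "Mn ` P"]) auto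
  moreover have "a (Mn q0) = (\<Sum>q\<in>{q\<in>P. Mn q = Mn q0}. c G0)"
    unfolding a_def
  proof (intro sum.cong refl)
    fix q assume "q \<in> {q\<in>P. Mn q = Mn q0}"
    then have "Mon (lst (fst q)) (snd q) = Mon (lst G0) \<sigma>0" unfolding Mn_def q0_def by auto
    then have "mset (lst (fst q)) = mset (lst G0)" using Mon_recover inj0 by blast
    then show "c (fst q) = c G0" using lst[of "fst q"] lst[of G0] by simp
  qed
  moreover have "card {q\<in>P. Mn q = Mn q0} \<noteq> 0"
  proof -
    have mem: "q0 \<in> {q\<in>P. Mn q = Mn q0}" using q0P by simp
    have "finite {q\<in>P. Mn q = Mn q0}" using fP by simp
    then show ?thesis using mem card_0_eq by blast
  qed
  ultimately show "c G0 = 0" by simp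
qed

end
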